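(* Every $\mathrm{CAT}(0)$ group $G$ satisfies the quadratic radial isoperimetric inequality: there exist a finite presentation $G=\langle S\mid R\rangle$ and a constant $C>0$ such that for every word $w=s_1\cdots s_n\in F_S$ representing the identity $e$ of $G$, $$\mathrm{Area}(w)\leq C\sum_{i=1}^n\big(d_S(\bar w(i),e)+1\big),$$ where $\bar w(i)$ is the image in $G$ of $s_1\cdots s_i$.
   Context: A $\mathrm{CAT}(0)$ group is a group acting properly discontinuously and cocompactly by isometries on a proper geodesic $\mathrm{CAT}(0)$ metric space $(X,d)$, i.e. a geodesic metric space in which for every geodesic triangle $ABC$ with Euclidean comparison triangle $\bar A\bar B\bar C$ (same side lengths), every point $D$ on $BC$ with corresponding $\bar D$ on $\bar B\bar C$ ($d(B,D)=|\bar B\bar D|$) satisfies $d(A,D)\leq|\bar A\bar D|$. For a finite presentation $\langle S\mid R\rangle$ ($S$ finite, $S=S^{-1}$, $R\subset F_S$ finite), $d_S(a,b)=\min\{n:b^{-1}a=s_1\cdots s_n,\ s_i\in S\}$ is the word metric, and for $w\in F_S$ representing $e$, $\mathrm{Area}(w)$ is the smallest $k$ with $w=\prod_{i=1}^k v_ir_iv_i^{-1}$ in $F_S$, $v_i$ reduced words on $S$, $r_i^{\pm1}\in R$. *)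

theory Defs
  imports "HOL-Analysis.Analysis" "HOL-Algebra.Group"
begin

definition geodesic_segment :: "(real \<Rightarrow> 'x::metric_space) \<Rightarrow> 'x \<Rightarrow> 'x \<Rightarrow> bool" where
  "geodesic_segment \<gamma> x y \<longleftrightarrow> \<gamma> 0 = x \<and> \<gamma> (dist x y) = y \<and>
     (\<forall>s\<in>{0..dist x y}. \<forall>t\<in>{0..dist x y}. dist (\<gamma> s) (\<gamma> t) = \<bar>s - t\<bar>)"

definition geodesic_space :: "'x::metric_space itself \<Rightarrow> bool" where
  "geodesic_space _ \<longleftrightarrow> (\<forall>x y::'x. \<exists>\<gamma>. geodesic_segment \<gamma> x y)"

definition proper_space :: "'x::metric_space itself \<Rightarrow> bool" where
  "proper_space _ \<longleftrightarrow> (\<forall>(x::'x) r. compact (cball x r))"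

text \<open>CAT(0) inequality: for every geodesic triangle ABC (side BC given by the geodesic gamma),
  every point D = gamma t on BC, and every Euclidean comparison triangle in the plane
  (complex numbers), d(A,D) \<le> |Abar Dbar|.\<close>
definition CAT0_ineq :: "'x::metric_space itself \<Rightarrow> bool" where
  "CAT0_ineq _ \<longleftrightarrow>
    (\<forall>(A::'x) B C \<gamma> t Ab Bb Cb Db.
       geodesic_segment \<gamma> B C \<and> t \<in> {0..dist B C} \<and>
       dist Ab Bb = dist A B \<and> dist Bb Cb = dist B C \<and> dist Ab Cb = dist A C \<and>
       Db \<in> closed_segment Bb Cb \<and> dist Bb (Db::complex) = t
       \<longrightarrow> dist A (\<gamma> t) \<le> dist Ab Db)"

definition CAT0_space :: "'x::metric_space itself \<Rightarrow> bool" where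
  "CAT0_space X \<longleftrightarrow> geodesic_space X \<and> proper_space X \<and> CAT0_ineq X"

definition cat0_group_action :: "('g, 'b) monoid_scheme \<Rightarrow> ('g \<Rightarrow> 'x::metric_space \<Rightarrow> 'x) \<Rightarrow> bool" where
  "cat0_group_action G \<phi> \<longleftrightarrow>
     CAT0_space TYPE('x) \<and>
     \<comment> \<open>group action\<close>
     (\<forall>x. \<phi> \<one>\<^bsub>G\<^esub> x = x) \<and>
     (\<forall>g\<in>carrier G. \<forall>h\<in>carrier G. \<forall>x. \<phi> (g \<otimes>\<^bsub>G\<^esub> h) x = \<phi> g (\<phi> h x)) \<and>
     \<comment> \<open>by isometries\<close>
     (\<forall>g\<in>carrier G. \<forall>x y. dist (\<phi> g x) (\<phi> g y) = dist x y) \<and>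
     \<comment> \<open>properly discontinuously\<close>
     (\<forall>K::'x set. compact K \<longrightarrow> finite {g\<in>carrier G. \<phi> g ` K \<inter> K \<noteq> {}}) \<and>
     \<comment> \<open>cocompactly\<close>
     (\<exists>K::'x set. compact K \<and> (\<Union>g\<in>carrier G. \<phi> g ` K) = UNIV)"

text \<open>A letter (a, False) stands for the generator a, (a, True) for its formal inverse;
  so the symmetric generating set is S = A \<union> A^{-1}.\<close>
type_synonym 'a word = "('a \<times> bool) list"

definition word_over :: "'a set \<Rightarrow> 'a word \<Rightarrow> bool" where
  "word_over A w \<longleftrightarrow> fst ` set w \<subseteq> A"

definition inv_word :: "'a word \<Rightarrow> 'a word" where
  "inv_word w = rev (map (\<lambda>(a, b). (a, \<not> b)) w)"

definition free_step :: "'a word \<Rightarrow> 'a word \<Rightarrow> bool" where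
  "free_step xs ys \<longleftrightarrow> (\<exists>u v a b. xs = u @ [(a, b), (a, \<not> b)] @ v \<and> ys = u @ v)"

definition free_eq :: "'a word \<Rightarrow> 'a word \<Rightarrow> bool" where
  "free_eq = (\<lambda>x y. free_step x y \<or> free_step y x)\<^sup>*\<^sup>*"

definition eval_word :: "('g, 'b) monoid_scheme \<Rightarrow> ('a \<Rightarrow> 'g) \<Rightarrow> 'a word \<Rightarrow> 'g" where
  "eval_word G \<iota> w = foldr (\<lambda>(a, b) acc. (if b then inv\<^bsub>G\<^esub> (\<iota> a) else \<iota> a) \<otimes>\<^bsub>G\<^esub> acc) w \<one>\<^bsub>G\<^esub>"

definition conj_prod :: "('a word \<times> 'a word \<times> bool) list \<Rightarrow> 'a word" where
  "conj_prod cs = concat (map (\<lambda>(v, r, e). v @ (if e then inv_word r else r) @ inv_word v) cs)"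

definition is_conj_decomp :: "'a set \<Rightarrow> 'a word set \<Rightarrow> 'a word \<Rightarrow> ('a word \<times> 'a word \<times> bool) list \<Rightarrow> bool" where
  "is_conj_decomp A R w cs \<longleftrightarrow>
     (\<forall>(v, r, e)\<in>set cs. r \<in> R \<and> word_over A v) \<and> free_eq w (conj_prod cs)"

definition Area :: "'a set \<Rightarrow> 'a word set \<Rightarrow> 'a word \<Rightarrow> nat" where
  "Area A R w = (LEAST k. \<exists>cs. length cs = k \<and> is_conj_decomp A R w cs)"

text \<open>G = < S | R > via the generator map iota : A \<rightarrow> G: iota induces a surjection
  F_S \<rightarrow> G whose kernel is the normal closure of R.\<close>
definition finite_presentation ::
  "('g, 'b) monoid_scheme \<Rightarrow> 'a set \<Rightarrow> ('a \<Rightarrow> 'g) \<Rightarrow> 'a word set \<Rightarrow> bool" where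
  "finite_presentation G A \<iota> R \<longleftrightarrow>
     finite A \<and> finite R \<and> \<iota> ` A \<subseteq> carrier G \<and> (\<forall>r\<in>R. word_over A r) \<and>
     (\<forall>g\<in>carrier G. \<exists>w. word_over A w \<and> eval_word G \<iota> w = g) \<and>
     (\<forall>w. word_over A w \<longrightarrow> (eval_word G \<iota> w = \<one>\<^bsub>G\<^esub> \<longleftrightarrow> (\<exists>cs. is_conj_decomp A R w cs)))"

definition word_length :: "('g, 'b) monoid_scheme \<Rightarrow> 'a set \<Rightarrow> ('a \<Rightarrow> 'g) \<Rightarrow> 'g \<Rightarrow> nat" where
  "word_length G A \<iota> g = (LEAST n. \<exists>w. word_over A w \<and> length w = n \<and> eval_word G \<iota> w = g)"

end

theory Submission
  imports Defs
begin


lemma free_eq_refl[simp]: "free_eq x x"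
  by (simp add: free_eq_def)

lemma free_eq_sym: "free_eq x y \<Longrightarrow> free_eq y x"
proof -
  have "symp (\<lambda>x y. free_step x y \<or> free_step y x)" by (auto simp: symp_def)
  then have "symp free_eq" unfolding free_eq_def by (rule symp_rtranclp)
  then show "free_eq x y \<Longrightarrow> free_eq y x" by (rule sympD)
qed

lemma free_eq_trans: "free_eq x y \<Longrightarrow> free_eq y z \<Longrightarrow> free_eq x z"
  unfolding free_eq_def by (rule rtranclp_trans)

lemma free_step_ctx: "free_step x y \<Longrightarrow> free_step (u @ x @ v) (u @ y @ v)"
  unfolding free_step_def
proof (elim exE conjE)
  fix u' v' a b assume "x = u' @ [(a, b), (a, \<not> b)] @ v'" "y = u' @ v'"
  then show "\<exists>u'' v'' a b. u @ x @ v = u'' @ [(a, b), (a, \<not> b)] @ v'' \<and> u @ y @ v = u'' @ v''"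
    by (intro exI[of _ "u @ u'"] exI[of _ "v' @ v"] exI[of _ a] exI[of _ b]) simp
qed

lemma free_eq_ctx: "free_eq x y \<Longrightarrow> free_eq (u @ x @ v) (u @ y @ v)"
  unfolding free_eq_def
proof (induction rule: rtranclp_induct)
  case base then show ?case by simp
next
  case (step y z)
  then show ?case
    by (auto intro: rtranclp.rtrancl_into_rtrancl dest: free_step_ctx[of _ _ u v])
qed

lemma free_eq_app: "free_eq x x' \<Longrightarrow> free_eq y y' \<Longrightarrow> free_eq (x @ y) (x' @ y')"
proof -
  assume a: "free_eq x x'" "free_eq y y'"
  have "free_eq ([] @ x @ y) ([] @ x' @ y)" using free_eq_ctx[OF a(1)] .
  moreover have "free_eq (x' @ y @ []) (x' @ y' @ [])" using free_eq_ctx[OF a(2)] .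
  ultimately show ?thesis using free_eq_trans by auto
qed

lemma inv_word_Nil[simp]: "inv_word [] = []" by (simp add: inv_word_def)
lemma inv_word_Cons[simp]: "inv_word (c # x) = inv_word x @ [(fst c, \<not> snd c)]"
  by (cases c) (simp add: inv_word_def)
lemma inv_word_append[simp]: "inv_word (x @ y) = inv_word y @ inv_word x"
  by (simp add: inv_word_def)
lemma inv_word_inv_word[simp]: "inv_word (inv_word x) = x"
  by (induction x) auto
lemma length_inv_word[simp]: "length (inv_word x) = length x"
  by (simp add: inv_word_def)
lemma word_over_inv_word[simp]: "word_over A (inv_word x) = word_over A x"
  by (induction x) (auto simp: word_over_def)
lemma word_over_append[simp]: "word_over A (x @ y) \<longleftrightarrow> word_over A x \<and> word_over A y"
  by (auto simp: word_over_def)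
lemma word_over_Cons[simp]: "word_over A (c # y) \<longleftrightarrow> fst c \<in> A \<and> word_over A y"
  by (auto simp: word_over_def)
lemma word_over_Nil[simp]: "word_over A []"
  by (auto simp: word_over_def)

lemma free_eq_pair: "free_eq [(a, b), (a, \<not> b)] []"
proof -
  have "[(a, b), (a, \<not> b)] = [] @ [(a, b), (a, \<not> b)] @ [] \<and> [] = [] @ ([]::'a word)" by simp
  then have "free_step [(a, b), (a, \<not> b)] []" unfolding free_step_def by blast
  then show ?thesis unfolding free_eq_def by (simp add: r_into_rtranclp)
qed

lemma free_eq_cancel: "free_eq (x @ inv_word x) []"
proof (induction x)
  case Nil then show ?case by simp
next
  case (Cons c x)
  obtain a b where c: "c = (a, b)" by (cases c)
  have "free_eq ([c] @ (x @ inv_word x) @ [(a, \<not> b)]) ([c] @ [] @ [(a, \<not> b)])"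
    by (rule free_eq_ctx[OF Cons.IH])
  then have "free_eq ((c # x) @ inv_word (c # x)) [(a, b), (a, \<not> b)]"
    using c by simp
  then show ?case by (rule free_eq_trans[OF _ free_eq_pair])
qed

lemma free_eq_cancel': "free_eq (inv_word x @ x) []"
  using free_eq_cancel[of "inv_word x"] by simp

lemma free_eq_cancel_mid: "free_eq (u @ x @ inv_word x @ v) (u @ v)"
  using free_eq_ctx[OF free_eq_cancel[of x], of u v] by simp

lemma free_eq_cancel_mid': "free_eq (u @ inv_word x @ x @ v) (u @ v)"
  using free_eq_ctx[OF free_eq_cancel'[of x], of u v] by simp

lemma conj_prod_Nil[simp]: "conj_prod [] = []" by (simp add: conj_prod_def)
lemma conj_prod_Cons[simp]: "conj_prod ((v, r, e) # cs) = v @ (if e then inv_word r else r) @ inv_word v @ conj_prod cs"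
  by (simp add: conj_prod_def)
lemma conj_prod_append[simp]: "conj_prod (xs @ ys) = conj_prod xs @ conj_prod ys"
  by (simp add: conj_prod_def)


definition lval :: "('g, 'b) monoid_scheme \<Rightarrow> ('a \<Rightarrow> 'g) \<Rightarrow> ('a \<times> bool) \<Rightarrow> 'g" where
  "lval G \<iota> c = (if snd c then inv\<^bsub>G\<^esub> (\<iota> (fst c)) else \<iota> (fst c))"

lemma eval_Nil[simp]: "eval_word G \<iota> [] = \<one>\<^bsub>G\<^esub>"
  by (simp add: eval_word_def)

lemma eval_Cons[simp]: "eval_word G \<iota> (c # w) = lval G \<iota> c \<otimes>\<^bsub>G\<^esub> eval_word G \<iota> w"
  by (cases c) (simp add: eval_word_def lval_def)

context group
begin

lemma lval_closed: "\<forall>a. \<iota> a \<in> carrier G \<Longrightarrow> lval G \<iota> c \<in> carrier G"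
  by (simp add: lval_def)

lemma eval_closed: "\<forall>a. \<iota> a \<in> carrier G \<Longrightarrow> eval_word G \<iota> w \<in> carrier G"
  by (induction w) (auto intro: lval_closed)

lemma eval_append: "\<forall>a. \<iota> a \<in> carrier G \<Longrightarrow> eval_word G \<iota> (x @ y) = eval_word G \<iota> x \<otimes> eval_word G \<iota> y"
  by (induction x) (auto simp: m_assoc eval_closed lval_closed)

lemma eval_inv_word: "\<forall>a. \<iota> a \<in> carrier G \<Longrightarrow> eval_word G \<iota> (inv_word x) = inv (eval_word G \<iota> x)"
proof (induction x)
  case Nil then show ?case by simp
next
  case (Cons c x)
  have "lval G \<iota> (fst c, \<not> snd c) = inv (lval G \<iota> c)"
    using Cons.prems by (simp add: lval_def)
  then show ?case using Cons
    by (simp add: eval_append inv_mult_group eval_closed lval_closed)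
qed

lemma eval_free_step: "\<forall>a. \<iota> a \<in> carrier G \<Longrightarrow> free_step x y \<Longrightarrow> eval_word G \<iota> x = eval_word G \<iota> y"
  unfolding free_step_def
proof (elim exE conjE)
  fix u v a b assume h: "\<forall>a. \<iota> a \<in> carrier G" and x: "x = u @ [(a, b), (a, \<not> b)] @ v" and y: "y = u @ v"
  have "lval G \<iota> (a, b) \<otimes> lval G \<iota> (a, \<not> b) = \<one>"
    using h by (simp add: lval_def)
  then have e: "eval_word G \<iota> ([(a, b), (a, \<not> b)] @ v) = eval_word G \<iota> v"
  proof -
    have "eval_word G \<iota> ([(a, b), (a, \<not> b)] @ v) = lval G \<iota> (a, b) \<otimes> (lval G \<iota> (a, \<not> b) \<otimes> eval_word G \<iota> v)"
      by simp
    also have "\<dots> = (lval G \<iota> (a, b) \<otimes> lval G \<iota> (a, \<not> b)) \<otimes> eval_word G \<iota> v"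
      using h by (simp add: m_assoc lval_closed eval_closed)
    finally show ?thesis using h by (simp add: \<open>lval G \<iota> (a, b) \<otimes> lval G \<iota> (a, \<not> b) = \<one>\<close> eval_closed)
  qed
  show "eval_word G \<iota> x = eval_word G \<iota> y"
    using h x y e by (simp add: eval_append[of _ u] eval_closed del: eval_Cons append_Cons)
qed

lemma eval_free_eq: assumes h: "\<forall>a. \<iota> a \<in> carrier G" and fe: "free_eq x y"
  shows "eval_word G \<iota> x = eval_word G \<iota> y"
proof -
  from fe have "(\<lambda>x y. free_step x y \<or> free_step y x)\<^sup>*\<^sup>* x y" unfolding free_eq_def .
  then show ?thesis
  proof (induction rule: rtranclp_induct)
    case base then show ?case by simp
  next
    case (step y z)
    then show ?case using eval_free_step[OF h, of y z] eval_free_step[OF h, of z y] by auto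
  qed
qed

lemma eval_conj_prod: "\<forall>a. \<iota> a \<in> carrier G \<Longrightarrow> (\<forall>(v, r, e)\<in>set cs. eval_word G \<iota> r = \<one>) \<Longrightarrow> eval_word G \<iota> (conj_prod cs) = \<one>"
proof (induction cs)
  case Nil then show ?case by simp
next
  case (Cons c cs)
  obtain v r e where c: "c = (v, r, e)" by (cases c)
  have r: "eval_word G \<iota> r = \<one>" using Cons.prems c by auto
  have r': "eval_word G \<iota> (if e then inv_word r else r) = \<one>"
    using r Cons.prems(1) by (simp add: eval_inv_word)
  have ih: "eval_word G \<iota> (conj_prod cs) = \<one>" using Cons by auto
  show ?case using c r' ih Cons.prems(1)
    by (simp add: eval_append eval_inv_word eval_closed r_inv del: if_split)
qed

end



lemma geod_dist:
  assumes "geodesic_segment \<gamma> B C" "s \<in> {0..dist B C}" "t \<in> {0..dist B C}"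
  shows "dist (\<gamma> s) (\<gamma> t) = \<bar>s - t\<bar>"
  using assms unfolding geodesic_segment_def by blast

lemma geod_start: "geodesic_segment \<gamma> B C \<Longrightarrow> \<gamma> 0 = B"
  unfolding geodesic_segment_def by blast

lemma geod_end: "geodesic_segment \<gamma> B C \<Longrightarrow> \<gamma> (dist B C) = C"
  unfolding geodesic_segment_def by blast

lemma geod_dist_start:
  assumes "geodesic_segment \<gamma> B C" "s \<in> {0..dist B C}"
  shows "dist B (\<gamma> s) = s"
proof -
  have "dist (\<gamma> 0) (\<gamma> s) = \<bar>0 - s\<bar>" using geod_dist[OF assms(1) _ assms(2)] by simp
  then show ?thesis using geod_start[OF assms(1)] assms(2) by simp
qed

lemma geod_dist_end:
  assumes "geodesic_segment \<gamma> B C" "s \<in> {0..dist B C}"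
  shows "dist (\<gamma> s) C = dist B C - s"
proof -
  have "dist (\<gamma> s) (\<gamma> (dist B C)) = \<bar>s - dist B C\<bar>" using geod_dist[OF assms(1) assms(2)] by simp
  then show ?thesis using geod_end[OF assms(1)] assms(2) by simp
qed

lemma cmod_sq: "(cmod (Complex u v))\<^sup>2 = u\<^sup>2 + v\<^sup>2"
  by (simp add: complex_norm)

lemma comparison_triangle:
  fixes a e l :: real
  assumes "0 < l" "0 \<le> a" "0 \<le> e" "e \<le> a + l" "a \<le> e + l" "l \<le> a + e" "0 \<le> t" "t \<le> 1"
  shows "\<exists>Ab::complex. dist Ab 0 = a \<and> dist 0 (complex_of_real l) = l \<and> dist Ab (complex_of_real l) = e \<and>
     (dist Ab (complex_of_real (t * l)))\<^sup>2 = (1 - t) * a\<^sup>2 + t * e\<^sup>2 - t * (1 - t) * l\<^sup>2"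
proof -
  define x where "x = (l\<^sup>2 + a\<^sup>2 - e\<^sup>2) / (2 * l)"
  have x2: "2 * l * x = l\<^sup>2 + a\<^sup>2 - e\<^sup>2" using assms(1) unfolding x_def by simp
  have b1: "l\<^sup>2 + a\<^sup>2 - e\<^sup>2 \<le> 2 * l * a"
  proof -
    have "\<bar>l - a\<bar> \<le> e" using assms by arith
    then have "(l - a)\<^sup>2 \<le> e\<^sup>2" by (metis abs_ge_zero power2_abs power_mono)
    then show ?thesis by (simp add: power2_eq_square algebra_simps)
  qed
  have b2: "- (l\<^sup>2 + a\<^sup>2 - e\<^sup>2) \<le> 2 * l * a"
  proof -
    have "e\<^sup>2 \<le> (l + a)\<^sup>2" using assms by (intro power_mono) auto
    then show ?thesis by (simp add: power2_eq_square algebra_simps)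
  qed
  have "\<bar>x\<bar> \<le> a"
  proof -
    have "\<bar>2 * l * x\<bar> \<le> 2 * l * a" using b1 b2 x2 by simp
    then have "2 * l * \<bar>x\<bar> \<le> 2 * l * a" using assms(1) by (simp add: abs_mult)
    then show ?thesis using assms(1) by simp
  qed
  then have xa: "x\<^sup>2 \<le> a\<^sup>2" by (metis abs_ge_zero power2_abs power_mono)
  define y where "y = sqrt (a\<^sup>2 - x\<^sup>2)"
  have y2: "y\<^sup>2 = a\<^sup>2 - x\<^sup>2" unfolding y_def using xa by simp
  define Ab where "Ab = Complex x y"
  have d1: "dist Ab 0 = a"
    using y2 assms(2) by (simp add: Ab_def dist_norm complex_norm)
  have d2: "dist 0 (complex_of_real l) = l" using assms(1) by (simp add: dist_norm)
  have "(x - l)\<^sup>2 + y\<^sup>2 = e\<^sup>2" using y2 x2 by (simp add: power2_eq_square algebra_simps)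
  moreover have "Ab - complex_of_real l = Complex (x - l) y" by (simp add: Ab_def complex_eq_iff)
  ultimately have d3: "dist Ab (complex_of_real l) = e"
    using assms(3) by (simp add: dist_norm complex_norm)
  have "(x - t * l)\<^sup>2 + y\<^sup>2 = (1 - t) * a\<^sup>2 + t * e\<^sup>2 - t * (1 - t) * l\<^sup>2"
  proof -
    have "(x - t * l)\<^sup>2 + y\<^sup>2 = a\<^sup>2 - t * (2 * l * x) + t\<^sup>2 * l\<^sup>2"
      using y2 by (simp add: power2_eq_square algebra_simps)
    also have "\<dots> = (1 - t) * a\<^sup>2 + t * e\<^sup>2 - t * (1 - t) * l\<^sup>2"
      unfolding x2 by (simp add: power2_eq_square algebra_simps)
    finally show ?thesis .
  qed
  moreover have "Ab - complex_of_real (t * l) = Complex (x - t * l) y" by (simp add: Ab_def complex_eq_iff)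
  ultimately have d4: "(dist Ab (complex_of_real (t * l)))\<^sup>2 = (1 - t) * a\<^sup>2 + t * e\<^sup>2 - t * (1 - t) * l\<^sup>2"
    by (simp only: dist_norm cmod_sq)
  show ?thesis using d1 d2 d3 d4 by blast
qed

lemma CN_ineq:
  fixes A B C :: "'x::metric_space"
  assumes cat: "CAT0_ineq TYPE('x)" and g: "geodesic_segment \<gamma> B C" and t: "0 \<le> t" "t \<le> 1"
  shows "(dist A (\<gamma> (t * dist B C)))\<^sup>2 \<le> (1 - t) * (dist A B)\<^sup>2 + t * (dist A C)\<^sup>2 - t * (1 - t) * (dist B C)\<^sup>2"
proof (cases "dist B C = 0")
  case True
  then have "B = C" by simp
  then show ?thesis using True geod_start[OF g] by (simp add: algebra_simps)
next
  case False
  define l where "l = dist B C"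
  have l: "0 < l" using False l_def by simp
  obtain Ab :: complex where Ab: "dist Ab 0 = dist A B" "dist 0 (complex_of_real l) = l"
    "dist Ab (complex_of_real l) = dist A C"
    "(dist Ab (complex_of_real (t * l)))\<^sup>2 = (1 - t) * (dist A B)\<^sup>2 + t * (dist A C)\<^sup>2 - t * (1 - t) * l\<^sup>2"
    using comparison_triangle[OF l, of "dist A B" "dist A C" t] t l_def
      dist_triangle[of A C B] dist_triangle[of A B C] dist_triangle[of B C A]
    by (auto simp: dist_commute)
  have seg: "complex_of_real (t * l) \<in> closed_segment 0 (complex_of_real l)"
    unfolding closed_segment_def using t by (intro CollectI exI[of _ t]) (simp add: scaleR_conv_of_real)
  have tl: "t * l \<in> {0..dist B C}" using t l l_def by (simp add: mult_left_le_one_le)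
  have "dist A (\<gamma> (t * l)) \<le> dist Ab (complex_of_real (t * l))"
  proof -
    have d0: "dist 0 (complex_of_real (t * l)) = t * l" using t l by (simp add: dist_norm norm_mult)
    have "geodesic_segment \<gamma> B C \<and> t * l \<in> {0..dist B C} \<and>
       dist Ab 0 = dist A B \<and> dist 0 (complex_of_real l) = dist B C \<and> dist Ab (complex_of_real l) = dist A C \<and>
       complex_of_real (t * l) \<in> closed_segment 0 (complex_of_real l) \<and> dist 0 (complex_of_real (t * l)) = t * l"
      using g tl Ab seg l_def d0 by simp
    then show ?thesis
      using cat[unfolded CAT0_ineq_def, rule_format, of \<gamma> B C "t * l" Ab 0 A "complex_of_real l" "complex_of_real (t * l)"]
      by blast
  qed
  then have "(dist A (\<gamma> (t * l)))\<^sup>2 \<le> (dist Ab (complex_of_real (t * l)))\<^sup>2"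
    by (intro power_mono) auto
  then show ?thesis using Ab(4) unfolding l_def by linarith
qed


lemma alg1: fixes t l l' c :: real shows "(1 - t) * (t * l)\<^sup>2 + t * ((1 - t) * l'\<^sup>2 + t * c\<^sup>2 - t * (1 - t) * l\<^sup>2) - t * (1 - t) * l'\<^sup>2 = (t * c)\<^sup>2"
  by (simp add: power2_eq_square algebra_simps)

lemma comb:
  fixes P Y Y' :: "'x::metric_space"
  assumes cat: "CAT0_ineq TYPE('x)" and g: "geodesic_segment \<gamma> P Y" and g': "geodesic_segment \<gamma>' P Y'"
    and t: "0 \<le> t" "t \<le> 1"
  shows "dist (\<gamma> (t * dist P Y)) (\<gamma>' (t * dist P Y')) \<le> t * dist Y Y'"
proof -
  define l where "l = dist P Y"
  define l' where "l' = dist P Y'"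
  define c where "c = dist Y Y'"
  define p where "p = \<gamma> (t * l)"
  have A: "(dist Y' p)\<^sup>2 \<le> (1 - t) * l'\<^sup>2 + t * c\<^sup>2 - t * (1 - t) * l\<^sup>2"
    using CN_ineq[OF cat g t, of Y'] unfolding p_def l_def l'_def c_def by (simp add: dist_commute)
  have tl: "t * l \<in> {0..dist P Y}" using t unfolding l_def by (simp add: mult_left_le_one_le)
  have pP: "dist p P = t * l" using geod_dist_start[OF g tl] unfolding p_def by (simp add: dist_commute)
  have B: "(dist p (\<gamma>' (t * l')))\<^sup>2 \<le> (1 - t) * (dist p P)\<^sup>2 + t * (dist p Y')\<^sup>2 - t * (1 - t) * l'\<^sup>2"
    using CN_ineq[OF cat g' t, of p] unfolding l'_def .
  have tA: "t * (dist p Y')\<^sup>2 \<le> t * ((1 - t) * l'\<^sup>2 + t * c\<^sup>2 - t * (1 - t) * l\<^sup>2)"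
    using A t by (simp add: dist_commute mult_left_mono)
  have "(dist p (\<gamma>' (t * l')))\<^sup>2 \<le> (1 - t) * (t * l)\<^sup>2 + t * ((1 - t) * l'\<^sup>2 + t * c\<^sup>2 - t * (1 - t) * l\<^sup>2) - t * (1 - t) * l'\<^sup>2"
    using B tA unfolding pP by linarith
  also have "\<dots> = (t * c)\<^sup>2" by (rule alg1)
  finally have sq: "(dist p (\<gamma>' (t * l')))\<^sup>2 \<le> (t * c)\<^sup>2" .
  have "0 \<le> t * c" using t unfolding c_def by simp
  then have "dist p (\<gamma>' (t * l')) \<le> t * c" by (rule power2_le_imp_le[OF sq])
  then show ?thesis unfolding p_def l_def l'_def c_def .
qed

lemma disc_arith:
  fixes j l l' :: real
  assumes "0 \<le> j" "0 < l" "l \<le> l'"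
  shows "\<bar>min j l / l * l' - min j l'\<bar> \<le> l' - l"
proof (cases "j \<le> l")
  case True
  then have "min j l = j" "min j l' = j" using assms by auto
  moreover have "j / l * l' - j = j * (l' - l) / l" using assms by (simp add: field_simps)
  moreover have "j * (l' - l) / l \<le> l' - l"
  proof -
    have "j * (l' - l) \<le> l * (l' - l)" using True assms by (intro mult_right_mono) auto
    then show ?thesis using assms by (simp add: divide_le_eq mult.commute)
  qed
  moreover have "0 \<le> j * (l' - l) / l" using assms by simp
  ultimately show ?thesis by simp
next
  case False
  then have "min j l = l" by simp
  then show ?thesis using assms False by (cases "j \<le> l'") auto
qed

lemma comb_disc_aux:
  fixes P Y Y' :: "'x::metric_space"
  assumes cat: "CAT0_ineq TYPE('x)" and g: "geodesic_segment \<gamma> P Y" and g': "geodesic_segment \<gamma>' P Y'"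
    and j: "0 \<le> j" and le: "dist P Y \<le> dist P Y'"
  shows "dist (\<gamma> (min j (dist P Y))) (\<gamma>' (min j (dist P Y'))) \<le> 2 * dist Y Y'"
proof -
  define l where "l = dist P Y"
  define l' where "l' = dist P Y'"
  define c where "c = dist Y Y'"
  have lc: "l' \<le> l + c" unfolding l_def l'_def c_def by (rule dist_triangle)
  have u': "min j l' \<in> {0..dist P Y'}" using j unfolding l'_def by auto
  show ?thesis
  proof (cases "l = 0")
    case True
    have "\<gamma> (min j l) = P" using True geod_start[OF g] j by simp
    moreover have "dist P (\<gamma>' (min j l')) = min j l'" using geod_dist_start[OF g' u'] unfolding l'_def .
    moreover have "min j l' \<le> l'" by simp
    moreover have "0 \<le> c" unfolding c_def by simp
    ultimately have "dist (\<gamma> (min j l)) (\<gamma>' (min j l')) \<le> 2 * c" using lc True by (simp only:)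
    then show ?thesis by (simp only: l_def l'_def c_def)
  next
    case False
    then have l: "0 < l" unfolding l_def by simp
    define t where "t = min j l / l"
    have t: "0 \<le> t" "t \<le> 1" using l j unfolding t_def by auto
    have tl: "t * l = min j l" using l unfolding t_def by simp
    have 1: "dist (\<gamma> (t * l)) (\<gamma>' (t * l')) \<le> t * c"
      using comb[OF cat g g' t] unfolding l_def l'_def c_def .
    have "t * c \<le> c" using t unfolding c_def by (simp add: mult_left_le_one_le)
    have tl': "t * l' \<in> {0..dist P Y'}" using t unfolding l'_def by (simp add: mult_left_le_one_le)
    have 2: "dist (\<gamma>' (t * l')) (\<gamma>' (min j l')) = \<bar>t * l' - min j l'\<bar>"
      using geod_dist[OF g' tl' u'] .
    have "\<bar>t * l' - min j l'\<bar> \<le> l' - l"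
      using disc_arith[OF j l] le unfolding t_def l_def l'_def by simp
    moreover have h1: "dist (\<gamma> (min j l)) (\<gamma>' (t * l')) \<le> t * c" using 1 unfolding tl .
    ultimately have "dist (\<gamma> (min j l)) (\<gamma>' (min j l')) \<le> 2 * c"
      using 2 \<open>t * c \<le> c\<close> lc dist_triangle[of "\<gamma> (min j l)" "\<gamma>' (min j l')" "\<gamma>' (t * l')"]
      by linarith
    then show ?thesis by (simp only: l_def l'_def c_def)
  qed
qed

lemma comb_disc:
  fixes P Y Y' :: "'x::metric_space"
  assumes cat: "CAT0_ineq TYPE('x)" and g: "geodesic_segment \<gamma> P Y" and g': "geodesic_segment \<gamma>' P Y'"
    and j: "0 \<le> j"
  shows "dist (\<gamma> (min j (dist P Y))) (\<gamma>' (min j (dist P Y'))) \<le> 2 * dist Y Y'"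
proof (cases "dist P Y \<le> dist P Y'")
  case True then show ?thesis using comb_disc_aux[OF cat g g' j] by simp
next
  case False
  then show ?thesis using comb_disc_aux[OF cat g' g j] by (simp add: dist_commute)
qed



locale cat0ctx = group G for G :: "('g, 'b) monoid_scheme" (structure) +
  fixes \<phi> :: "'g \<Rightarrow> 'x::metric_space \<Rightarrow> 'x" and x0 :: 'x and r :: real and n :: nat and f :: "nat \<Rightarrow> 'g"
  assumes act: "cat0_group_action G \<phi>"
    and r0: "0 \<le> r"
    and dense: "\<forall>y. \<exists>g\<in>carrier G. dist y (\<phi> g x0) \<le> r"
    and fbij: "bij_betw f {..<n} {g \<in> carrier G. dist x0 (\<phi> g x0) \<le> 2 * r + 1}"
begin

definition "D = 2 * r + 1"
definition "S0 = {g \<in> carrier G. dist x0 (\<phi> g x0) \<le> D}"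
definition "AA = {..<n}"
definition "\<iota> a = (if a < n then f a else \<one>\<^bsub>G\<^esub>)"
definition "letter k = (the_inv_into {..<n} f k, False)"

lemma D_pos: "1 \<le> D" using r0 by (simp add: D_def)

lemma cat: "CAT0_ineq TYPE('x)" using act by (simp add: cat0_group_action_def CAT0_space_def)
lemma geo_space: "geodesic_space TYPE('x)" using act by (simp add: cat0_group_action_def CAT0_space_def)
lemma act_one[simp]: "\<phi> \<one> x = x" using act by (simp add: cat0_group_action_def)
lemma act_mult: "g \<in> carrier G \<Longrightarrow> h \<in> carrier G \<Longrightarrow> \<phi> (g \<otimes> h) x = \<phi> g (\<phi> h x)"
  using act by (simp add: cat0_group_action_def)
lemma isom: "g \<in> carrier G \<Longrightarrow> dist (\<phi> g x) (\<phi> g y) = dist x y"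
  using act by (simp add: cat0_group_action_def)

lemma act_inv: "g \<in> carrier G \<Longrightarrow> \<phi> (inv g) (\<phi> g x) = x"
  by (metis act_mult act_one inv_closed l_inv)

lemma dist_inv_mult: "g \<in> carrier G \<Longrightarrow> h \<in> carrier G \<Longrightarrow> dist x0 (\<phi> (inv g \<otimes> h) x0) = dist (\<phi> g x0) (\<phi> h x0)"
proof -
  assume g: "g \<in> carrier G" and h: "h \<in> carrier G"
  have "dist x0 (\<phi> (inv g \<otimes> h) x0) = dist (\<phi> g x0) (\<phi> g (\<phi> (inv g \<otimes> h) x0))"
    using g by (simp add: isom)
  also have "\<phi> g (\<phi> (inv g \<otimes> h) x0) = \<phi> h x0"
    using g h by (simp add: act_mult[symmetric] m_assoc[symmetric])
  finally show ?thesis .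
qed

lemma dist_mult: "g \<in> carrier G \<Longrightarrow> h \<in> carrier G \<Longrightarrow> dist (\<phi> g x0) (\<phi> (g \<otimes> h) x0) = dist x0 (\<phi> h x0)"
  by (simp add: act_mult isom)

lemma dist_inv: "g \<in> carrier G \<Longrightarrow> dist x0 (\<phi> (inv g) x0) = dist x0 (\<phi> g x0)"
  using dist_inv_mult[of g \<one>] by (simp add: dist_commute)

lemma move_mult: "g \<in> carrier G \<Longrightarrow> h \<in> carrier G \<Longrightarrow> dist x0 (\<phi> (g \<otimes> h) x0) \<le> dist x0 (\<phi> g x0) + dist x0 (\<phi> h x0)"
  using dist_triangle[of x0 "\<phi> (g \<otimes> h) x0" "\<phi> g x0"] dist_mult[of g h] by simp

lemma \<iota>_closed: "\<forall>a. \<iota> a \<in> carrier G"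
  using fbij by (auto simp: \<iota>_def bij_betw_def)

lemma \<iota>_S0: "a \<in> AA \<Longrightarrow> \<iota> a \<in> S0"
  using fbij by (auto simp: \<iota>_def bij_betw_def AA_def S0_def D_def)

lemma S0_inv: "k \<in> S0 \<Longrightarrow> inv k \<in> S0"
  by (simp add: S0_def dist_inv)

lemma lval_S0: "fst c \<in> AA \<Longrightarrow> lval G \<iota> c \<in> S0"
  by (simp add: lval_def \<iota>_S0 S0_inv)

lemma lval_carrier: "lval G \<iota> c \<in> carrier G"
  by (rule lval_closed[OF \<iota>_closed])

lemma letter: assumes "k \<in> S0" shows "fst (letter k) \<in> AA" "lval G \<iota> (letter k) = k"
proof -
  have k: "k \<in> f ` {..<n}" using assms fbij by (simp add: bij_betw_def S0_def D_def)
  have inj: "inj_on f {..<n}" using fbij by (simp add: bij_betw_def)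
  have a: "the_inv_into {..<n} f k \<in> {..<n}" using the_inv_into_into[OF inj k, of "{..<n}"] by simp
  show "fst (letter k) \<in> AA" using a by (simp add: letter_def AA_def)
  show "lval G \<iota> (letter k) = k"
    using a f_the_inv_into_f[OF inj k] by (simp add: letter_def lval_def \<iota>_def)
qed

lemma S0_finite_ok: "finite AA" by (simp add: AA_def)

lemma eval_carrier: "eval_word G \<iota> w \<in> carrier G" by (rule eval_closed[OF \<iota>_closed])

lemma move_word: "word_over AA u \<Longrightarrow> dist x0 (\<phi> (eval_word G \<iota> u) x0) \<le> D * length u"
proof (induction u)
  case Nil then show ?case by simp
next
  case (Cons c u)
  have c: "dist x0 (\<phi> (lval G \<iota> c) x0) \<le> D" using lval_S0[of c] Cons.prems by (simp add: S0_def)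
  have "dist x0 (\<phi> (eval_word G \<iota> (c # u)) x0) \<le> dist x0 (\<phi> (lval G \<iota> c) x0) + dist x0 (\<phi> (eval_word G \<iota> u) x0)"
    using move_mult[OF lval_carrier eval_carrier] by simp
  then show ?case using c Cons by (simp add: algebra_simps)
qed

end



context cat0ctx
begin

definition "geo h = (SOME \<gamma>. geodesic_segment \<gamma> x0 (\<phi> h x0))"
definition "len h = dist x0 (\<phi> h x0)"
definition "pt h j = geo h (min (real j) (len h))"
definition "Gs h j = (if j = 0 then \<one>\<^bsub>G\<^esub> else if len h \<le> real j then h
   else (SOME g. g \<in> carrier G \<and> dist (pt h j) (\<phi> g x0) \<le> r))"
definition "st h j = (if Gs h j = Gs h (Suc j) then [] else [letter (inv\<^bsub>G\<^esub> (Gs h j) \<otimes>\<^bsub>G\<^esub> Gs h (Suc j))])"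
definition "pth h k = concat (map (st h) [0..<k])"
definition "NN h = nat \<lceil>len h\<rceil> + 1"
definition "sig h = pth h (NN h)"

lemma geo: "geodesic_segment (geo h) x0 (\<phi> h x0)"
proof -
  have "\<exists>\<gamma>. geodesic_segment \<gamma> x0 (\<phi> h x0)" using geo_space by (simp add: geodesic_space_def)
  then show ?thesis unfolding geo_def by (rule someI_ex)
qed

lemma len_nonneg: "0 \<le> len h" by (simp add: len_def)

lemma pt_0: "pt h 0 = x0"
  using geod_start[OF geo[of h]] len_nonneg[of h] by (simp add: pt_def)

lemma pt_end: "len h \<le> real j \<Longrightarrow> pt h j = \<phi> h x0"
  using geod_end[OF geo[of h]] by (simp add: pt_def len_def)

lemma Gs: assumes h: "h \<in> carrier G" shows "Gs h j \<in> carrier G" "dist (pt h j) (\<phi> (Gs h j) x0) \<le> r"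
proof -
  have "Gs h j \<in> carrier G \<and> dist (pt h j) (\<phi> (Gs h j) x0) \<le> r"
  proof (cases "j = 0")
    case True then show ?thesis using r0 by (simp add: Gs_def pt_0)
  next
    case False
    show ?thesis
    proof (cases "len h \<le> real j")
      case True then show ?thesis using False h r0 by (simp add: Gs_def pt_end)
    next
      case F2: False
      have "\<exists>g. g \<in> carrier G \<and> dist (pt h j) (\<phi> g x0) \<le> r" using dense by blast
      then have "(SOME g. g \<in> carrier G \<and> dist (pt h j) (\<phi> g x0) \<le> r) \<in> carrier G \<and>
          dist (pt h j) (\<phi> (SOME g. g \<in> carrier G \<and> dist (pt h j) (\<phi> g x0) \<le> r) x0) \<le> r"
        by (rule someI_ex)
      then show ?thesis using False F2 by (simp add: Gs_def)
    qed
  qed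
  then show "Gs h j \<in> carrier G" "dist (pt h j) (\<phi> (Gs h j) x0) \<le> r" by auto
qed

lemma pt_step: "dist (pt h j) (pt h (Suc j)) \<le> 1"
proof -
  have a: "min (real j) (len h) \<in> {0..dist x0 (\<phi> h x0)}" "min (real (Suc j)) (len h) \<in> {0..dist x0 (\<phi> h x0)}"
    using len_nonneg[of h] by (auto simp: len_def)
  have "dist (pt h j) (pt h (Suc j)) = \<bar>min (real j) (len h) - min (real (Suc j)) (len h)\<bar>"
    unfolding pt_def by (rule geod_dist[OF geo a])
  also have "\<dots> \<le> 1" by (simp add: min_def)
  finally show ?thesis .
qed

lemma Gs_step: assumes h: "h \<in> carrier G" shows "inv (Gs h j) \<otimes> Gs h (Suc j) \<in> S0"
proof -
  have "dist (\<phi> (Gs h j) x0) (\<phi> (Gs h (Suc j)) x0) \<le> r + 1 + r"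
    using Gs(2)[OF h, of j] Gs(2)[OF h, of "Suc j"] pt_step[of h j]
      dist_triangle[of "\<phi> (Gs h j) x0" "\<phi> (Gs h (Suc j)) x0" "pt h j"]
      dist_triangle[of "pt h j" "\<phi> (Gs h (Suc j)) x0" "pt h (Suc j)"]
    by (simp add: dist_commute)
  then show ?thesis using Gs(1)[OF h] by (simp add: S0_def dist_inv_mult D_def)
qed

lemma st: assumes h: "h \<in> carrier G"
  shows "eval_word G \<iota> (st h j) = inv (Gs h j) \<otimes> Gs h (Suc j)" "word_over AA (st h j)" "length (st h j) \<le> 1"
proof -
  show "eval_word G \<iota> (st h j) = inv (Gs h j) \<otimes> Gs h (Suc j)"
    using letter(2)[OF Gs_step[OF h]] Gs(1)[OF h] by (auto simp: st_def)
  show "word_over AA (st h j)" using letter(1)[OF Gs_step[OF h]] by (simp add: st_def)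
  show "length (st h j) \<le> 1" by (simp add: st_def)
qed

lemma pth_Suc[simp]: "pth h (Suc k) = pth h k @ st h k" by (simp add: pth_def)
lemma pth_0[simp]: "pth h 0 = []" by (simp add: pth_def)

lemma pth: assumes h: "h \<in> carrier G"
  shows "eval_word G \<iota> (pth h k) = Gs h k" "word_over AA (pth h k)" "length (pth h k) \<le> k"
proof (induction k)
  case 0
  { case 1 show ?case by (simp add: Gs_def) }
  { case 2 show ?case by simp }
  { case 3 show ?case by simp }
next
  case (Suc k)
  { case 1
    have "eval_word G \<iota> (pth h (Suc k)) = Gs h k \<otimes> (inv (Gs h k) \<otimes> Gs h (Suc k))"
      using Suc.IH(1) st(1)[OF h] by (simp add: eval_append[OF \<iota>_closed])
    also have "\<dots> = Gs h (Suc k)" using Gs(1)[OF h] by (simp add: m_assoc[symmetric])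
    finally show ?case . }
  { case 2 show ?case using Suc.IH(2) st(2)[OF h] by simp }
  { case 3 show ?case using Suc.IH(3) st(3)[OF h, of k] by simp }
qed

lemma Gs_end: assumes "NN h \<le> j" shows "Gs h j = h"
proof -
  have "len h \<le> real (nat \<lceil>len h\<rceil>)" by linarith
  then show ?thesis using assms by (simp add: Gs_def NN_def)
qed

lemma pth_stable: "NN h \<le> k \<Longrightarrow> pth h k = pth h (NN h)"
proof (induction k)
  case 0 then show ?case by simp
next
  case (Suc k)
  show ?case
  proof (cases "NN h = Suc k")
    case True then show ?thesis by simp
  next
    case False
    then have "NN h \<le> k" using Suc.prems by simp
    then have "st h k = []" using Gs_end[of h k] Gs_end[of h "Suc k"] by (simp add: st_def)
    then show ?thesis using Suc.IH \<open>NN h \<le> k\<close> by simp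
  qed
qed

lemma sig: assumes h: "h \<in> carrier G"
  shows "eval_word G \<iota> (sig h) = h" "word_over AA (sig h)" "length (sig h) \<le> NN h"
proof -
  have e: "Gs h (NN h) = h" by (rule Gs_end) simp
  show "eval_word G \<iota> (sig h) = h" unfolding sig_def using pth(1)[OF h, of "NN h"] e by simp
  show "word_over AA (sig h)" unfolding sig_def by (rule pth(2)[OF h])
  show "length (sig h) \<le> NN h" unfolding sig_def by (rule pth(3)[OF h])
qed

lemma sig_path: "NN h \<le> k \<Longrightarrow> sig h = pth h k"
  unfolding sig_def by (rule pth_stable[symmetric])

lemma sig_one: "sig \<one> = []"
proof -
  have "len \<one> = 0" by (simp add: len_def)
  then have "\<And>j. Gs \<one> j = \<one>" by (simp add: Gs_def)
  then have "\<And>j. st \<one> j = []" by (simp add: st_def)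
  then show ?thesis by (simp add: sig_def pth_def)
qed

lemma NN_le: "real (NN h) \<le> len h + 2"
  unfolding NN_def using len_nonneg[of h] by linarith

end



context cat0ctx
begin

definition "BB = nat \<lceil>2 * r + 2 * D\<rceil> + 1"
definition "LL = 2 * BB + nat \<lceil>D\<rceil> + 2"
definition "Rels = {w. word_over AA w \<and> length w \<le> LL \<and> eval_word G \<iota> w = \<one>\<^bsub>G\<^esub>}"
definition "valid cs = (\<forall>(v, rr, e)\<in>set cs. rr \<in> Rels \<and> word_over AA v)"
definition "rg h h' j = sig (inv\<^bsub>G\<^esub> (Gs h j) \<otimes>\<^bsub>G\<^esub> Gs h' j)"

lemma mcanc: "x \<in> carrier G \<Longrightarrow> y \<in> carrier G \<Longrightarrow> x \<otimes> (inv x \<otimes> y) = y"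
  by (simp add: m_assoc[symmetric])
lemma mcanc': "x \<in> carrier G \<Longrightarrow> y \<in> carrier G \<Longrightarrow> inv x \<otimes> (x \<otimes> y) = y"
  by (simp add: m_assoc[symmetric])

lemma valid_Nil[simp]: "valid []" by (simp add: valid_def)
lemma valid_Cons[simp]: "valid ((v, rr, e) # cs) \<longleftrightarrow> rr \<in> Rels \<and> word_over AA v \<and> valid cs"
  by (simp add: valid_def)
lemma valid_append[simp]: "valid (xs @ ys) \<longleftrightarrow> valid xs \<and> valid ys"
  unfolding valid_def by (simp only: set_append ball_Un)

lemma NN_bound: "len k \<le> X \<Longrightarrow> NN k \<le> nat \<lceil>X\<rceil> + 1"
proof -
  assume "len k \<le> X"
  then have "\<lceil>len k\<rceil> \<le> \<lceil>X\<rceil>" by (rule ceiling_mono)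
  then have "nat \<lceil>len k\<rceil> \<le> nat \<lceil>X\<rceil>" by (rule nat_mono)
  then show ?thesis unfolding NN_def by simp
qed

lemma pt_close:
  assumes "h \<in> carrier G" "h' \<in> carrier G"
  shows "dist (pt h j) (pt h' j) \<le> 2 * dist (\<phi> h x0) (\<phi> h' x0)"
  unfolding pt_def len_def by (rule comb_disc[OF cat geo geo]) simp

lemma rg:
  assumes h: "h \<in> carrier G" and h': "h' \<in> carrier G" and d: "dist (\<phi> h x0) (\<phi> h' x0) \<le> D"
  shows "eval_word G \<iota> (rg h h' j) = inv (Gs h j) \<otimes> Gs h' j" "word_over AA (rg h h' j)"
    "length (rg h h' j) \<le> BB"
proof -
  have c: "inv (Gs h j) \<otimes> Gs h' j \<in> carrier G" using Gs(1)[OF h] Gs(1)[OF h'] by simp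
  show "eval_word G \<iota> (rg h h' j) = inv (Gs h j) \<otimes> Gs h' j" unfolding rg_def by (rule sig(1)[OF c])
  show "word_over AA (rg h h' j)" unfolding rg_def by (rule sig(2)[OF c])
  have "dist (\<phi> (Gs h j) x0) (\<phi> (Gs h' j) x0) \<le> r + 2 * D + r"
    using Gs(2)[OF h, of j] Gs(2)[OF h', of j] pt_close[OF h h', of j] d
      dist_triangle[of "\<phi> (Gs h j) x0" "\<phi> (Gs h' j) x0" "pt h j"]
      dist_triangle[of "pt h j" "\<phi> (Gs h' j) x0" "pt h' j"]
    by (simp add: dist_commute)
  then have "len (inv (Gs h j) \<otimes> Gs h' j) \<le> 2 * r + 2 * D"
    using Gs(1)[OF h] Gs(1)[OF h'] by (simp add: len_def dist_inv_mult)
  then have "NN (inv (Gs h j) \<otimes> Gs h' j) \<le> BB" unfolding BB_def by (rule NN_bound)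
  then show "length (rg h h' j) \<le> BB" using sig(3)[OF c] unfolding rg_def by linarith
qed

lemma cell_eval:
  assumes "a \<in> carrier G" "b \<in> carrier G" "a' \<in> carrier G" "b' \<in> carrier G"
  shows "(inv a \<otimes> b) \<otimes> ((inv b \<otimes> b') \<otimes> (inv (inv a' \<otimes> b') \<otimes> inv (inv a \<otimes> a'))) = \<one>"
  using assms by (simp add: inv_mult_group m_assoc mcanc mcanc')

lemma ladder_T:
  assumes h: "h \<in> carrier G" and h': "h' \<in> carrier G" and d: "dist (\<phi> h x0) (\<phi> h' x0) \<le> D"
  shows "\<exists>cs. valid cs \<and> free_eq (pth h k @ rg h h' k @ inv_word (pth h' k)) (conj_prod cs) \<and> length cs = k"
proof (induction k)
  case 0
  have "rg h h' 0 = []" by (simp add: rg_def Gs_def sig_one)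
  then show ?case by (intro exI[of _ "[]"]) simp
next
  case (Suc k)
  then obtain cs where cs: "valid cs" "free_eq (pth h k @ rg h h' k @ inv_word (pth h' k)) (conj_prod cs)" "length cs = k"
    by blast
  define P where "P = pth h k"
  define P' where "P' = pth h' k"
  define s where "s = st h k"
  define s' where "s' = st h' k"
  define g where "g = rg h h' k"
  define g' where "g' = rg h h' (Suc k)"
  define C where "C = s @ g' @ inv_word s' @ inv_word g"
  have Crel: "C \<in> Rels"
  proof -
    have "word_over AA C" using st(2)[OF h] st(2)[OF h'] rg(2)[OF h h' d]
      by (simp add: C_def s_def s'_def g_def g'_def)
    moreover have "length C \<le> LL"
      using st(3)[OF h, of k] st(3)[OF h', of k] rg(3)[OF h h' d, of k] rg(3)[OF h h' d, of "Suc k"]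
      by (simp add: C_def s_def s'_def g_def g'_def LL_def)
    moreover have "eval_word G \<iota> C = \<one>"
      using st(1)[OF h] st(1)[OF h'] rg(1)[OF h h' d] Gs(1)[OF h] Gs(1)[OF h']
      by (simp add: C_def s_def s'_def g_def g'_def eval_append[OF \<iota>_closed] eval_inv_word[OF \<iota>_closed]
          cell_eval del: inv_mult_group)
    ultimately show ?thesis by (simp add: Rels_def)
  qed
  have PA: "word_over AA P" unfolding P_def by (rule pth(2)[OF h])
  have e1: "P @ C @ inv_word P @ (P @ g @ inv_word P') = (P @ s @ g' @ inv_word s' @ inv_word g) @ inv_word P @ P @ (g @ inv_word P')"
    by (simp add: C_def)
  have e2: "(P @ s @ g' @ inv_word s' @ inv_word g) @ (g @ inv_word P') = (P @ s @ g' @ inv_word s') @ inv_word g @ g @ inv_word P'"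
    by simp
  have e3: "(P @ s @ g' @ inv_word s') @ inv_word P' = pth h (Suc k) @ rg h h' (Suc k) @ inv_word (pth h' (Suc k))"
    by (simp add: P_def P'_def s_def s'_def g'_def)
  have f1: "free_eq (P @ C @ inv_word P @ (P @ g @ inv_word P')) (pth h (Suc k) @ rg h h' (Suc k) @ inv_word (pth h' (Suc k)))"
    unfolding e1 e3[symmetric]
    by (rule free_eq_trans[OF free_eq_cancel_mid'], unfold e2, rule free_eq_cancel_mid')
  have f2: "free_eq (P @ C @ inv_word P @ (P @ g @ inv_word P')) (conj_prod ((P, C, False) # cs))"
    using free_eq_ctx[OF cs(2)[folded P_def P'_def g_def], of "P @ C @ inv_word P" "[]"] by simp
  show ?case
    using free_eq_trans[OF free_eq_sym[OF f1] f2] Crel PA cs(1) cs(3)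
    by (intro exI[of _ "(P, C, False) # cs"]) simp
qed

lemma ladder:
  assumes h: "h \<in> carrier G" and c: "fst c \<in> AA"
  shows "\<exists>cs. valid cs \<and> free_eq (sig h @ [c] @ inv_word (sig (h \<otimes> lval G \<iota> c))) (conj_prod cs) \<and>
     length cs = max (NN h) (NN (h \<otimes> lval G \<iota> c)) + 1"
proof -
  define e where "e = lval G \<iota> c"
  define h' where "h' = h \<otimes> e"
  have e: "e \<in> carrier G" unfolding e_def by (rule lval_carrier)
  have h': "h' \<in> carrier G" using h e by (simp add: h'_def)
  have eS: "e \<in> S0" unfolding e_def by (rule lval_S0[OF c])
  have d: "dist (\<phi> h x0) (\<phi> h' x0) \<le> D" using eS h e by (simp add: h'_def dist_mult S0_def)
  define M where "M = max (NN h) (NN h')"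
  obtain cs where cs: "valid cs" "free_eq (pth h M @ rg h h' M @ inv_word (pth h' M)) (conj_prod cs)" "length cs = M"
    using ladder_T[OF h h' d, of M] by blast
  have s1: "pth h M = sig h" by (rule sig_path[symmetric]) (simp add: M_def)
  have s2: "pth h' M = sig h'" by (rule sig_path[symmetric]) (simp add: M_def)
  have "Gs h M = h" "Gs h' M = h'" by (rule Gs_end, simp add: M_def)+
  then have s3: "rg h h' M = sig e" using h e by (simp add: rg_def h'_def mcanc')
  define R0 where "R0 = [c] @ inv_word (sig e)"
  have R0: "R0 \<in> Rels"
  proof -
    have "len e \<le> D" using eS by (simp add: S0_def len_def)
    then have "NN e \<le> nat \<lceil>D\<rceil> + 1" by (rule NN_bound)
    then have "length R0 \<le> LL" using sig(3)[OF e] by (simp add: R0_def LL_def)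
    moreover have "word_over AA R0" using c sig(2)[OF e] by (simp add: R0_def)
    moreover have "eval_word G \<iota> R0 = \<one>" using sig(1)[OF e] e
      by (simp add: R0_def eval_inv_word[OF \<iota>_closed] e_def[symmetric] eval_closed[OF \<iota>_closed])
    ultimately show ?thesis by (simp add: Rels_def)
  qed
  define X where "X = sig h"
  define Y where "Y = sig e"
  have e1: "sig h @ R0 @ inv_word (sig h) @ (sig h @ sig e @ inv_word (sig h')) =
      (X @ [c] @ inv_word Y) @ inv_word X @ X @ (Y @ inv_word (sig h'))"
    by (simp add: R0_def X_def Y_def)
  have e2: "(X @ [c] @ inv_word Y) @ (Y @ inv_word (sig h')) = (X @ [c]) @ inv_word Y @ Y @ inv_word (sig h')"
    by simp
  have f1: "free_eq (sig h @ R0 @ inv_word (sig h) @ (sig h @ sig e @ inv_word (sig h'))) (sig h @ [c] @ inv_word (sig h'))"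
    unfolding e1
    by (rule free_eq_trans[OF free_eq_cancel_mid'], unfold e2, rule free_eq_trans[OF free_eq_cancel_mid'])
      (simp add: X_def)
  have f2: "free_eq (sig h @ R0 @ inv_word (sig h) @ (sig h @ sig e @ inv_word (sig h'))) (conj_prod ((sig h, R0, False) # cs))"
    using free_eq_ctx[OF cs(2)[unfolded s1 s2 s3], of "sig h @ R0 @ inv_word (sig h)" "[]"] by simp
  show ?thesis
    using free_eq_trans[OF free_eq_sym[OF f1] f2] R0 sig(2)[OF h] cs(1) cs(3)
    by (intro exI[of _ "(sig h, R0, False) # cs"]) (simp add: M_def h'_def e_def)
qed

end



context cat0ctx
begin

definition "hs w i = eval_word G \<iota> (take i w)"

lemma decomp:
  assumes w: "word_over AA w"
  shows "k \<le> length w \<Longrightarrow> \<exists>cs. valid cs \<and> free_eq (take k w @ inv_word (sig (hs w k))) (conj_prod cs) \<and>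
     length cs = (\<Sum>i<k. max (NN (hs w i)) (NN (hs w (Suc i))) + 1)"
proof (induction k)
  case 0
  have "hs w 0 = \<one>" by (simp add: hs_def)
  then show ?case by (intro exI[of _ "[]"]) (simp add: sig_one)
next
  case (Suc k)
  then have k: "k < length w" by simp
  then obtain cs where cs: "valid cs" "free_eq (take k w @ inv_word (sig (hs w k))) (conj_prod cs)"
    "length cs = (\<Sum>i<k. max (NN (hs w i)) (NN (hs w (Suc i))) + 1)"
    using Suc.IH by auto
  define c where "c = w ! k"
  have cA: "fst c \<in> AA" using w k unfolding c_def word_over_def by auto
  have tk: "take (Suc k) w = take k w @ [c]" using k by (simp add: c_def take_Suc_conv_app_nth)
  have hk: "hs w k \<in> carrier G" by (simp add: hs_def eval_carrier)
  have hsk: "hs w (Suc k) = hs w k \<otimes> lval G \<iota> c"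
    using tk by (simp add: hs_def eval_append[OF \<iota>_closed] lval_closed[OF \<iota>_closed] eval_closed[OF \<iota>_closed])
  obtain cs2 where cs2: "valid cs2" "free_eq (sig (hs w k) @ [c] @ inv_word (sig (hs w (Suc k)))) (conj_prod cs2)"
    "length cs2 = max (NN (hs w k)) (NN (hs w (Suc k))) + 1"
    using ladder[OF hk cA] unfolding hsk by blast
  have f1: "free_eq (take (Suc k) w @ inv_word (sig (hs w (Suc k))))
     ((take k w @ inv_word (sig (hs w k))) @ (sig (hs w k) @ [c] @ inv_word (sig (hs w (Suc k)))))"
    using free_eq_sym[OF free_eq_cancel_mid'[of "take k w" "sig (hs w k)" "[c] @ inv_word (sig (hs w (Suc k)))"]]
    by (simp add: tk)
  have f2: "free_eq ((take k w @ inv_word (sig (hs w k))) @ (sig (hs w k) @ [c] @ inv_word (sig (hs w (Suc k)))))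
     (conj_prod (cs @ cs2))"
    using free_eq_app[OF cs(2) cs2(2)] by simp
  show ?case
    using free_eq_trans[OF f1 f2] cs(1) cs2(1) cs(3) cs2(3)
    by (intro exI[of _ "cs @ cs2"]) simp
qed

lemma len_word_length:
  assumes u: "word_over AA u"
  shows "len (eval_word G \<iota> u) \<le> D * real (word_length G AA \<iota> (eval_word G \<iota> u))"
proof -
  let ?P = "\<lambda>m. \<exists>u'. word_over AA u' \<and> length u' = m \<and> eval_word G \<iota> u' = eval_word G \<iota> u"
  have "?P (length u)" using u by blast
  then have "?P (LEAST m. ?P m)" by (rule LeastI)
  then obtain u' where u': "word_over AA u'" "length u' = word_length G AA \<iota> (eval_word G \<iota> u)"
    "eval_word G \<iota> u' = eval_word G \<iota> u"
    unfolding word_length_def by blast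
  show ?thesis using move_word[OF u'(1)] u' by (simp add: len_def)
qed

lemma len_step:
  assumes "a \<in> carrier G" "fst c \<in> AA"
  shows "len a \<le> len (a \<otimes> lval G \<iota> c) + D"
proof -
  have "dist (\<phi> a x0) (\<phi> (a \<otimes> lval G \<iota> c) x0) \<le> D"
    using dist_mult[OF assms(1) lval_carrier] lval_S0[OF assms(2)] by (simp add: S0_def)
  then show ?thesis
    using dist_triangle[of x0 "\<phi> a x0" "\<phi> (a \<otimes> lval G \<iota> c) x0"]
      dist_commute[of "\<phi> (a \<otimes> lval G \<iota> c) x0" "\<phi> a x0"] unfolding len_def by linarith
qed

lemma main_bound:
  assumes w: "word_over AA w" and e: "eval_word G \<iota> w = \<one>"
  shows "\<exists>cs. valid cs \<and> free_eq w (conj_prod cs) \<and>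
    real (length cs) \<le> (D + 3) * (\<Sum>i=1..length w. real (word_length G AA \<iota> (eval_word G \<iota> (take i w))) + 1)"
proof -
  obtain cs where cs: "valid cs" "free_eq (take (length w) w @ inv_word (sig (hs w (length w)))) (conj_prod cs)"
    "length cs = (\<Sum>i<length w. max (NN (hs w i)) (NN (hs w (Suc i))) + 1)"
    using decomp[OF w, of "length w"] by auto
  have "hs w (length w) = \<one>" using e by (simp add: hs_def)
  then have fe: "free_eq w (conj_prod cs)" using cs(2) by (simp add: sig_one)
  define F where "F i = real (word_length G AA \<iota> (eval_word G \<iota> (take i w))) + 1" for i
  have trm: "real (max (NN (hs w i)) (NN (hs w (Suc i))) + 1) \<le> (D + 3) * F (Suc i)" if i: "i < length w" for i
  proof -
    define c where "c = w ! i"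
    have cA: "fst c \<in> AA" using w i unfolding c_def word_over_def by auto
    have tk: "take (Suc i) w = take i w @ [c]" using i by (simp add: c_def take_Suc_conv_app_nth)
    have hsk: "hs w (Suc i) = hs w i \<otimes> lval G \<iota> c"
      using tk by (simp add: hs_def eval_append[OF \<iota>_closed] lval_closed[OF \<iota>_closed] eval_closed[OF \<iota>_closed])
    have l1: "len (hs w i) \<le> len (hs w (Suc i)) + D"
      unfolding hsk by (rule len_step[OF _ cA]) (simp add: hs_def eval_carrier)
    have wS: "word_over AA (take (Suc i) w)" using w by (auto simp: word_over_def dest: in_set_takeD)
    have l2: "len (hs w (Suc i)) \<le> D * (F (Suc i) - 1)"
      using len_word_length[OF wS] by (simp add: hs_def F_def)
    have "real (NN (hs w i)) \<le> len (hs w (Suc i)) + D + 2" using NN_le[of "hs w i"] l1 by linarith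
    moreover have "real (NN (hs w (Suc i))) \<le> len (hs w (Suc i)) + D + 2" using NN_le[of "hs w (Suc i)"] D_pos by linarith
    ultimately have "real (max (NN (hs w i)) (NN (hs w (Suc i))) + 1) \<le> D * (F (Suc i) - 1) + D + 3"
      using l2 by (simp add: max_def)
    also have "\<dots> \<le> (D + 3) * F (Suc i)"
    proof -
      have "0 \<le> F (Suc i) - 1" by (simp add: F_def)
      then have "D * (F (Suc i) - 1) \<le> (D + 3) * (F (Suc i) - 1)" by (intro mult_right_mono) auto
      then show ?thesis by (simp add: algebra_simps)
    qed
    finally show ?thesis .
  qed
  have "real (length cs) = (\<Sum>i<length w. real (max (NN (hs w i)) (NN (hs w (Suc i))) + 1))"
    unfolding cs(3) by (rule of_nat_sum)
  also have "\<dots> \<le> (\<Sum>i<length w. (D + 3) * F (Suc i))" by (rule sum_mono) (use trm in auto)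
  also have "\<dots> = (D + 3) * (\<Sum>i<length w. F (Suc i))" by (simp add: sum_distrib_left)
  also have "(\<Sum>i<length w. F (Suc i)) = (\<Sum>i=1..length w. F i)"
    using sum.atLeast1_atMost_eq[of F "length w"] by simp
  finally show ?thesis using cs(1) fe unfolding F_def by blast
qed

end



context cat0ctx
begin

lemma pres: "finite_presentation G AA \<iota> Rels"
proof -
  have fR: "finite Rels"
  proof (rule finite_subset)
    show "Rels \<subseteq> {xs. set xs \<subseteq> AA \<times> (UNIV :: bool set) \<and> length xs \<le> LL}"
      by (force simp: Rels_def word_over_def)
    show "finite {xs. set xs \<subseteq> AA \<times> (UNIV :: bool set) \<and> length xs \<le> LL}"
      by (rule finite_lists_length_le) (simp add: AA_def)
  qed
  have gen: "\<forall>g\<in>carrier G. \<exists>w. word_over AA w \<and> eval_word G \<iota> w = g"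
    using sig by blast
  have iff: "\<forall>w. word_over AA w \<longrightarrow> (eval_word G \<iota> w = \<one> \<longleftrightarrow> (\<exists>cs. is_conj_decomp AA Rels w cs))"
  proof (intro allI impI iffI)
    fix w assume w: "word_over AA w" and e: "eval_word G \<iota> w = \<one>"
    obtain cs where "valid cs" "free_eq w (conj_prod cs)" using main_bound[OF w e] by blast
    then show "\<exists>cs. is_conj_decomp AA Rels w cs" unfolding is_conj_decomp_def valid_def by blast
  next
    fix w assume "\<exists>cs. is_conj_decomp AA Rels w cs"
    then obtain cs where cs: "\<forall>(v, r, e)\<in>set cs. r \<in> Rels \<and> word_over AA v" "free_eq w (conj_prod cs)"
      unfolding is_conj_decomp_def by blast
    have "\<forall>(v, r, e)\<in>set cs. eval_word G \<iota> r = \<one>" using cs(1) by (auto simp: Rels_def)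
    then have "eval_word G \<iota> (conj_prod cs) = \<one>" by (rule eval_conj_prod[OF \<iota>_closed])
    then show "eval_word G \<iota> w = \<one>" using eval_free_eq[OF \<iota>_closed cs(2)] by simp
  qed
  show ?thesis unfolding finite_presentation_def
    using fR gen iff \<iota>_closed by (auto simp: AA_def Rels_def)
qed

lemma area_bound:
  assumes w: "word_over AA w" and e: "eval_word G \<iota> w = \<one>"
  shows "real (Area AA Rels w) \<le> (D + 3) * (\<Sum>i=1..length w. real (word_length G AA \<iota> (eval_word G \<iota> (take i w))) + 1)"
proof -
  obtain cs where cs: "valid cs" "free_eq w (conj_prod cs)"
    "real (length cs) \<le> (D + 3) * (\<Sum>i=1..length w. real (word_length G AA \<iota> (eval_word G \<iota> (take i w))) + 1)"
    using main_bound[OF w e] by blast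
  have "is_conj_decomp AA Rels w cs" using cs(1,2) unfolding is_conj_decomp_def valid_def by blast
  then have "Area AA Rels w \<le> length cs" unfolding Area_def by (intro Least_le) blast
  then show ?thesis using cs(3) by linarith
qed

lemma final: "\<exists>(A::nat set) \<iota> R (C::real). finite_presentation G A \<iota> R \<and> C > 0 \<and>
    (\<forall>w. word_over A w \<and> eval_word G \<iota> w = \<one>\<^bsub>G\<^esub> \<longrightarrow>
       real (Area A R w) \<le> C * (\<Sum>i=1..length w. real (word_length G A \<iota> (eval_word G \<iota> (take i w))) + 1))"
proof (intro exI[of _ AA] exI[of _ \<iota>] exI[of _ Rels] exI[of _ "D + 3"] conjI allI impI)
  show "finite_presentation G AA \<iota> Rels" by (rule pres)
  show "0 < D + 3" using D_pos by simp
  fix w assume "word_over AA w \<and> eval_word G \<iota> w = \<one>"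
  then show "real (Area AA Rels w) \<le> (D + 3) * (\<Sum>i=1..length w. real (word_length G AA \<iota> (eval_word G \<iota> (take i w))) + 1)"
    using area_bound by blast
qed

end

theorem theorem4p2:
  fixes G :: "('g, 'b) monoid_scheme" and \<phi> :: "'g \<Rightarrow> 'x::metric_space \<Rightarrow> 'x"
  assumes "group G" and "cat0_group_action G \<phi>"
  shows "\<exists>(A::nat set) \<iota> R (C::real). finite_presentation G A \<iota> R \<and> C > 0 \<and>
    (\<forall>w. word_over A w \<and> eval_word G \<iota> w = \<one>\<^bsub>G\<^esub> \<longrightarrow>
       real (Area A R w) \<le> C * (\<Sum>i=1..length w. real (word_length G A \<iota> (eval_word G \<iota> (take i w))) + 1))"
proof -
  define x0 :: 'x where "x0 = undefined"
  have act: "cat0_group_action G \<phi>" by fact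
  have cc: "\<exists>K::'x set. compact K \<and> (\<Union>g\<in>carrier G. \<phi> g ` K) = UNIV"
    using act unfolding cat0_group_action_def by (elim conjE) assumption
  have pd: "\<forall>K::'x set. compact K \<longrightarrow> finite {g\<in>carrier G. \<phi> g ` K \<inter> K \<noteq> {}}"
    using act unfolding cat0_group_action_def by (elim conjE) assumption
  have isom: "\<forall>g\<in>carrier G. \<forall>x y. dist (\<phi> g x) (\<phi> g y) = dist x y"
    using act unfolding cat0_group_action_def by (elim conjE) assumption
  obtain K :: "'x set" where K: "compact K" "(\<Union>g\<in>carrier G. \<phi> g ` K) = UNIV"
    using cc by (elim exE conjE)
  have "bounded K" using K(1) by (rule compact_imp_bounded)
  then obtain e where e: "\<forall>y\<in>K. dist x0 y \<le> e" unfolding bounded_any_center[of K x0] by blast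
  define r where "r = max e 0"
  have r0: "0 \<le> r" by (simp add: r_def)
  have dense: "\<forall>y. \<exists>g\<in>carrier G. dist y (\<phi> g x0) \<le> r"
  proof
    fix y :: 'x
    have "y \<in> (\<Union>g\<in>carrier G. \<phi> g ` K)" using K(2) by simp
    then obtain g k where g: "g \<in> carrier G" "k \<in> K" "y = \<phi> g k" by blast
    have "dist y (\<phi> g x0) = dist k x0" using g isom by auto
    also have "\<dots> \<le> r" using e g(2) unfolding r_def by (simp add: dist_commute le_max_iff_disj)
    finally show "\<exists>g\<in>carrier G. dist y (\<phi> g x0) \<le> r" using g(1) by blast
  qed
  define S where "S = {g \<in> carrier G. dist x0 (\<phi> g x0) \<le> 2 * r + 1}"
  have "finite S"
  proof -
    define Kb where "Kb = cball x0 (2 * r + 1)"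
    have "proper_space TYPE('x)" using act by (simp add: cat0_group_action_def CAT0_space_def)
    then have "compact Kb" unfolding proper_space_def Kb_def by simp
    then have "finite {g\<in>carrier G. \<phi> g ` Kb \<inter> Kb \<noteq> {}}"
      using pd by simp
    moreover have "S \<subseteq> {g\<in>carrier G. \<phi> g ` Kb \<inter> Kb \<noteq> {}}"
    proof
      fix g assume g: "g \<in> S"
      have "x0 \<in> Kb" using r0 by (simp add: Kb_def)
      then have "\<phi> g x0 \<in> \<phi> g ` Kb \<inter> Kb" using g by (simp add: S_def Kb_def)
      then show "g \<in> {g\<in>carrier G. \<phi> g ` Kb \<inter> Kb \<noteq> {}}" using g by (auto simp: S_def)
    qed
    ultimately show ?thesis by (rule finite_subset[rotated])
  qed
  then obtain f where f: "bij_betw f {0..<card S} S" using ex_bij_betw_nat_finite by blast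
  then have f': "bij_betw f {..<card S} S" by (simp add: atLeast0LessThan)
  have loc: "cat0ctx G \<phi> x0 r (card S) f"
  proof (intro cat0ctx.intro cat0ctx_axioms.intro)
    show "group G" by fact
    show "cat0_group_action G \<phi>" by fact
    show "0 \<le> r" by fact
    show "\<forall>y. \<exists>g\<in>carrier G. dist y (\<phi> g x0) \<le> r" by fact
    show "bij_betw f {..<card S} {g \<in> carrier G. dist x0 (\<phi> g x0) \<le> 2 * r + 1}"
      using f' unfolding S_def .
  qed
  interpret c: cat0ctx G \<phi> x0 r "card S" f by (rule loc)
  show ?thesis by (rule c.final)
qed



end
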